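(* Let $h\ge 1$, let $0<t_1<t_2<\dots<t_h$ be fixed points, let $W$ be a positive nondecreasing function with $W(t_1)\le \dots\le W(t_h)$ (all $W(t_j)>0$), and let $\xi_1,\dots,\xi_h,\zeta_1,\dots,\zeta_h$ be nonnegative integers with $\xi_j+\zeta_j\ge 1$ for every $j$. Consider the problem $$\text{maximize } \mathcal L(\mathbf p)=\prod_{j=1}^h p_j^{\xi_j}\Big(\sum_{k\ge j}\frac{p_k}{W(t_k)}\Big)^{\zeta_j}\quad\text{subject to } \sum_{j=1}^h p_j=1,\ p_j\ge 0\ (j=1,\dots,h).$$ Then this problem has a unique maximizer $\mathbf p=(p_1,\dots,p_h)$.
   Context: Here $p_j$ is the mass a discrete distribution assigns to $t_j$; $\xi_j$ and $\zeta_j$ are the numbers of uncensored and censored observations located at $t_j$, respectively. The convention $0^0=1$ is used. *)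

theory Defs
  imports Complex_Main
begin

definition feasible :: "nat \<Rightarrow> (nat \<Rightarrow> real) \<Rightarrow> bool" where
  "feasible h p \<longleftrightarrow> (\<forall>j. j \<notin> {1..h} \<longrightarrow> p j = 0) \<and> (\<forall>j\<in>{1..h}. p j \<ge> 0)
     \<and> (\<Sum>j=1..h. p j) = 1"

text \<open>The likelihood; the nat power satisfies the convention 0^0 = 1.\<close>
definition lik :: "nat \<Rightarrow> (nat \<Rightarrow> real) \<Rightarrow> (real \<Rightarrow> real) \<Rightarrow> (nat \<Rightarrow> nat) \<Rightarrow> (nat \<Rightarrow> nat)
    \<Rightarrow> (nat \<Rightarrow> real) \<Rightarrow> real" where
  "lik h t W \<xi> \<zeta> p = (\<Prod>j=1..h. p j ^ \<xi> j * (\<Sum>k=j..h. p k / W (t k)) ^ \<zeta> j)"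

end

theory Submission
  imports Defs "HOL-Analysis.Analysis"
begin

definition Sf :: "nat \<Rightarrow> (nat \<Rightarrow> real) \<Rightarrow> (nat \<Rightarrow> real) \<Rightarrow> nat \<Rightarrow> real" where
  "Sf h w p j = (\<Sum>k=j..h. p k / w k)"

lemma lik_Sf: "lik h t W \<xi> \<zeta> p = (\<Prod>j=1..h. p j ^ \<xi> j * Sf h (\<lambda>k. W (t k)) p j ^ \<zeta> j)"
  by (simp add: lik_def Sf_def)

lemma inj_lemma:
  fixes p q w :: "nat \<Rightarrow> real"
  assumes w: "\<And>k. k \<in> {1..h} \<Longrightarrow> 0 < w k"
    and cov: "\<And>j. j \<in> {1..h} \<Longrightarrow> \<xi> j + \<zeta> j \<ge> (1::nat)"
    and e1: "\<And>j. j \<in> {1..h} \<Longrightarrow> \<xi> j \<ge> 1 \<Longrightarrow> p j = q j"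
    and e2: "\<And>j. j \<in> {1..h} \<Longrightarrow> \<zeta> j \<ge> 1 \<Longrightarrow> Sf h w p j = Sf h w q j"
    and k: "k \<in> {1..h}"
  shows "p k = q k"
  using k
proof (induction "h - k" arbitrary: k rule: less_induct)
  case less
  show ?case
  proof (cases "\<xi> k \<ge> 1")
    case True then show ?thesis using e1 less.prems by blast
  next
    case False
    then have z: "\<zeta> k \<ge> 1" using cov[OF less.prems] by linarith
    have eqs: "(\<Sum>i=Suc k..h. p i / w i) = (\<Sum>i=Suc k..h. q i / w i)"
    proof (rule sum.cong)
      fix i assume i: "i \<in> {Suc k..h}"
      then have "p i = q i" using less.hyps[of i] less.prems by auto
      then show "p i / w i = q i / w i" by simp
    qed simp
    have kh: "k \<le> h" using less.prems by auto
    have "Sf h w p k = p k / w k + (\<Sum>i=Suc k..h. p i / w i)"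
      unfolding Sf_def using kh by (simp add: sum.atLeast_Suc_atMost)
    moreover have "Sf h w q k = q k / w k + (\<Sum>i=Suc k..h. q i / w i)"
      unfolding Sf_def using kh by (simp add: sum.atLeast_Suc_atMost)
    ultimately have "p k / w k = q k / w k" using e2[OF less.prems z] eqs by linarith
    then show ?thesis using w[OF less.prems] by simp
  qed
qed

lemma amgm_pow:
  fixes x y :: real
  assumes "0 \<le> x" "0 \<le> y"
  shows "x ^ n * y ^ n \<le> (((x + y) / 2) ^ n)\<^sup>2"
    and "x \<noteq> y \<Longrightarrow> n \<ge> 1 \<Longrightarrow> x ^ n * y ^ n < (((x + y) / 2) ^ n)\<^sup>2"
proof -
  have a: "x * y \<le> ((x+y)/2)^2"
  proof -
    have "0 \<le> (x-y)^2" by simp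
    then show ?thesis by (simp add: power2_eq_square field_simps)
  qed
  have e: "(((x + y) / 2) ^ n)\<^sup>2 = (((x+y)/2)^2)^n" by (simp add: power_mult[symmetric] mult.commute)
  show "x ^ n * y ^ n \<le> (((x + y) / 2) ^ n)\<^sup>2"
    unfolding e power_mult_distrib[symmetric] by (rule power_mono[OF a]) (use assms in simp)
  assume "x \<noteq> y" "n \<ge> 1"
  then have a': "x * y < ((x+y)/2)^2"
  proof -
    have "0 < (x-y)^2" using \<open>x \<noteq> y\<close> by simp
    then show ?thesis by (simp add: power2_eq_square field_simps)
  qed
  show "x ^ n * y ^ n < (((x + y) / 2) ^ n)\<^sup>2"
    unfolding e power_mult_distrib[symmetric] using \<open>n \<ge> 1\<close>
    by (intro power_strict_mono[OF a']) (use assms in auto)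
qed


lemma feasible_C:
  fixes h :: nat
  shows
  "feasible h p \<longleftrightarrow> p \<in> (PiE UNIV (\<lambda>j. if j \<in> {1..h} then {0..1} else {0::real})) \<inter> {p. sum p {1..h} = 1}"
proof
  assume f: "feasible h p"
  have "p j \<le> 1" if "j \<in> {1..h}" for j
  proof -
    have "p j \<le> sum p {1..h}" using f that by (intro member_le_sum) (auto simp: feasible_def)
    then show ?thesis using f by (simp add: feasible_def)
  qed
  then show "p \<in> (PiE UNIV (\<lambda>j. if j \<in> {1..h} then {0..1} else {0::real})) \<inter> {p. sum p {1..h} = 1}"
    using f by (auto simp: feasible_def PiE_iff)
next
  assume "p \<in> (PiE UNIV (\<lambda>j. if j \<in> {1..h} then {0..1} else {0::real})) \<inter> {p. sum p {1..h} = 1}"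
  then show "feasible h p" unfolding feasible_def PiE_iff
    by (auto split: if_splits)
qed

lemma compact_C:
  fixes h :: nat
  shows
  "compact ((PiE UNIV (\<lambda>j. if j \<in> {1..h} then {0..1} else {0::real})) \<inter> {p. sum p {1..h} = 1})"
proof (rule compact_Int_closed)
  have "compactin (product_topology (\<lambda>i. euclidean) UNIV) (PiE UNIV (\<lambda>j. if j \<in> {1..h} then {0..1} else {0::real}))"
    by (subst compactin_PiE) auto
  then show "compact (PiE UNIV (\<lambda>j. if j \<in> {1..h} then {0..1} else {0::real}))"
    by (simp add: euclidean_product_topology)
  show "closed {p::nat\<Rightarrow>real. sum p {1..h} = 1}"
    by (intro closed_Collect_eq continuous_on_sum continuous_on_const) auto
qed

lemma tpos:
  assumes "0 < t 1" "\<And>j. 1 \<le> j \<Longrightarrow> j < h \<Longrightarrow> t j < t (Suc j)"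
  shows "k \<in> {1..h} \<Longrightarrow> (0::real) < t k"
proof (induction k)
  case 0 then show ?case by simp
next
  case (Suc k)
  show ?case
  proof (cases "k = 0")
    case True then show ?thesis using assms by simp
  next
    case False
    then have "0 < t k" "t k < t (Suc k)" using Suc assms by auto
    then show ?thesis by simp
  qed
qed

theorem mainTheorem1:
  fixes h :: nat and t :: "nat \<Rightarrow> real" and W :: "real \<Rightarrow> real"
    and \<xi> \<zeta> :: "nat \<Rightarrow> nat"
  assumes "h \<ge> 1"
    and "0 < t 1"
    and "\<And>j. 1 \<le> j \<Longrightarrow> j < h \<Longrightarrow> t j < t (Suc j)"
    and "\<And>x. 0 < x \<Longrightarrow> 0 < W x"
    and "mono_on {0<..} W"
    and "\<And>j. j \<in> {1..h} \<Longrightarrow> \<xi> j + \<zeta> j \<ge> 1"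
  shows "\<exists>!p. feasible h p \<and> (\<forall>q. feasible h q \<longrightarrow> lik h t W \<xi> \<zeta> q \<le> lik h t W \<xi> \<zeta> p)"
proof -
  define w where "w = (\<lambda>k. W (t k))"
  have wpos: "0 < w k" if "k \<in> {1..h}" for k
    unfolding w_def using tpos[OF assms(2,3) that] assms(4) by blast
  define L where "L = (\<lambda>p. \<Prod>j=1..h. p j ^ \<xi> j * Sf h w p j ^ \<zeta> j)"
  have Leq: "lik h t W \<xi> \<zeta> p = L p" for p unfolding L_def lik_Sf w_def ..
  define C where "C = (PiE UNIV (\<lambda>j. if j \<in> {1..h} then {0..1} else {0::real})) \<inter> {p. sum p {1..h} = 1}"
  have fC: "feasible h p \<longleftrightarrow> p \<in> C" for p unfolding C_def by (rule feasible_C)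
  have Sf_nonneg: "0 \<le> Sf h w p j" if "feasible h p" "j \<ge> 1" for p j
    unfolding Sf_def using that wpos by (intro sum_nonneg divide_nonneg_pos) (auto simp: feasible_def)
  define u where "u = (\<lambda>j. if j \<in> {1..h} then 1 / real h else (0::real))"
  have fu: "feasible h u" using assms(1) by (auto simp: feasible_def u_def)
  have Lu: "0 < L u"
    unfolding L_def
  proof (intro prod_pos mult_pos_pos zero_less_power)
    fix j assume j: "j \<in> {1..h}"
    show "0 < u j" using j by (simp add: u_def)
    show "0 < Sf h w u j" unfolding Sf_def using j wpos
      by (intro sum_pos) (auto simp: u_def)
  qed
  have "\<exists>p\<in>C. \<forall>q\<in>C. L q \<le> L p"
  proof (rule continuous_attains_sup)
    show "compact C" unfolding C_def by (rule compact_C)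
    show "C \<noteq> {}" using fu fC by blast
    show "continuous_on C L" unfolding L_def Sf_def divide_inverse
      by (intro continuous_intros continuous_on_product_coordinates[THEN continuous_on_subset]) auto
  qed
  then obtain p where pC: "p \<in> C" and pmax: "\<forall>q\<in>C. L q \<le> L p" by blast
  show ?thesis
  proof (rule ex1I[of _ p])
    show "feasible h p \<and> (\<forall>q. feasible h q \<longrightarrow> lik h t W \<xi> \<zeta> q \<le> lik h t W \<xi> \<zeta> p)"
      using pC pmax fC Leq by auto
  next
    fix p' assume "feasible h p' \<and> (\<forall>q. feasible h q \<longrightarrow> lik h t W \<xi> \<zeta> q \<le> lik h t W \<xi> \<zeta> p')"
    then have fp': "feasible h p'" and p'max: "\<And>q. feasible h q \<Longrightarrow> L q \<le> L p'" using Leq by auto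
    have fp: "feasible h p" and pmax': "\<And>q. feasible h q \<Longrightarrow> L q \<le> L p" using pC pmax fC by auto
    have LL: "L p = L p'" using pmax' p'max fp fp' by (simp add: order_antisym)
    have Lp: "0 < L p" using pmax'[OF fu] Lu by simp
    define m where "m = (\<lambda>j. (p j + p' j) / 2)"
    have fm: "feasible h m" using fp fp'
      by (auto simp: feasible_def m_def sum.distrib sum_divide_distrib[symmetric])
    have Sm: "Sf h w m j = (Sf h w p j + Sf h w p' j) / 2" for j
    proof -
      have "(\<Sum>k=j..h. (p k + p' k) / 2 / w k) = (\<Sum>k=j..h. p k / w k / 2 + p' k / w k / 2)"
        by (rule sum.cong) (auto simp: add_divide_distrib)
      also have "\<dots> = (\<Sum>k=j..h. p k / w k) / 2 + (\<Sum>k=j..h. p' k / w k) / 2"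
        by (simp only: sum.distrib sum_divide_distrib)
      finally show ?thesis unfolding Sf_def m_def by (simp add: add_divide_distrib)
    qed
    define F where "F = (\<lambda>q j. q j ^ \<xi> j * Sf h w q j ^ \<zeta> j)"
    have LF: "L q = prod (F q) {1..h}" for q unfolding L_def F_def ..
    have Fnn: "0 \<le> F q j" if "feasible h q" "j \<in> {1..h}" for q j
      unfolding F_def using that Sf_nonneg[OF that(1)] by (auto simp: feasible_def)
    have Fpos: "0 < F q j" if "feasible h q" "j \<in> {1..h}" "0 < L q" for q j
    proof -
      have "prod (F q) {1..h} \<noteq> 0" using that(3) LF[of q] by linarith
      then have "F q j \<noteq> 0" using that(2) by (metis prod_zero_iff finite_atLeastAtMost)
      then show ?thesis using Fnn[OF that(1,2)] by simp
    qed
    have Spos: "0 < Sf h w q j ^ \<zeta> j" and Ppos: "0 < q j ^ \<xi> j"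
      if "feasible h q" "j \<in> {1..h}" "0 < L q" for q j
    proof -
      have n1: "0 \<le> Sf h w q j ^ \<zeta> j" using Sf_nonneg[OF that(1)] that(2) by simp
      have n2: "0 \<le> q j ^ \<xi> j" using that(1,2) by (simp add: feasible_def)
      have "0 < F q j" using Fpos[OF that] .
      then have "Sf h w q j ^ \<zeta> j \<noteq> 0" "q j ^ \<xi> j \<noteq> 0" unfolding F_def
        by (metis less_irrefl mult_zero_right, metis less_irrefl mult_zero_left)
      then show "0 < Sf h w q j ^ \<zeta> j" "0 < q j ^ \<xi> j" using n1 n2 by linarith+
    qed
    have key: "F p j * F p' j \<le> (F m j)\<^sup>2" if j: "j \<in> {1..h}" for j
    proof -
      have a: "p j ^ \<xi> j * p' j ^ \<xi> j \<le> (m j ^ \<xi> j)\<^sup>2"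
        unfolding m_def using fp fp' j by (intro amgm_pow(1)) (auto simp: feasible_def)
      have b: "Sf h w p j ^ \<zeta> j * Sf h w p' j ^ \<zeta> j \<le> (Sf h w m j ^ \<zeta> j)\<^sup>2"
        unfolding Sm using fp fp' j Sf_nonneg by (intro amgm_pow(1)) auto
      have "F p j * F p' j = (p j ^ \<xi> j * p' j ^ \<xi> j) * (Sf h w p j ^ \<zeta> j * Sf h w p' j ^ \<zeta> j)"
        unfolding F_def by (simp add: algebra_simps)
      also have "\<dots> \<le> (m j ^ \<xi> j)\<^sup>2 * (Sf h w m j ^ \<zeta> j)\<^sup>2"
        using a b fp fp' j Sf_nonneg by (intro mult_mono) (auto simp: feasible_def)
      also have "\<dots> = (F m j)\<^sup>2" unfolding F_def by (simp add: power_mult_distrib)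
      finally show ?thesis .
    qed
    have "p k = p' k" if k: "k \<in> {1..h}" for k
    proof (rule inj_lemma[where w = w and \<xi> = \<xi> and \<zeta> = \<zeta>, OF wpos assms(6) _ _ k])
      show "p j = p' j" if j: "j \<in> {1..h}" "1 \<le> \<xi> j" for j
      proof (rule ccontr)
        assume ne: "p j \<noteq> p' j"
        have a: "p j ^ \<xi> j * p' j ^ \<xi> j < (m j ^ \<xi> j)\<^sup>2"
          unfolding m_def using fp fp' j ne by (intro amgm_pow(2)) (auto simp: feasible_def)
        have b: "Sf h w p j ^ \<zeta> j * Sf h w p' j ^ \<zeta> j \<le> (Sf h w m j ^ \<zeta> j)\<^sup>2"
          unfolding Sm using fp fp' j Sf_nonneg by (intro amgm_pow(1)) auto
        have bpos: "0 < Sf h w p j ^ \<zeta> j * Sf h w p' j ^ \<zeta> j"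
          using Spos[OF fp j(1) Lp] Spos[OF fp' j(1)] Lp LL by simp
        have "F p j * F p' j = (p j ^ \<xi> j * p' j ^ \<xi> j) * (Sf h w p j ^ \<zeta> j * Sf h w p' j ^ \<zeta> j)"
          unfolding F_def by (simp add: algebra_simps)
        also have "\<dots> < (m j ^ \<xi> j)\<^sup>2 * (Sf h w m j ^ \<zeta> j)\<^sup>2"
          using a b bpos Ppos[OF fp j(1) Lp] Ppos[OF fp' j(1)] Lp LL by (intro mult_less_le_imp_less) auto
        also have "\<dots> = (F m j)\<^sup>2" unfolding F_def by (simp add: power_mult_distrib)
        finally have strict: "F p j * F p' j < (F m j)\<^sup>2" .
        have "L p * L p' < (L m)\<^sup>2"
          unfolding LF prod.distrib[symmetric] power2_eq_square prod.distrib[symmetric]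
        proof (rule prod_mono_strict[OF j(1)])
          show "F p j * F p' j < F m j * F m j" using strict by (simp add: power2_eq_square)
          fix i assume i: "i \<in> {1..h}"
          show "0 \<le> F p i * F p' i \<and> F p i * F p' i \<le> F m i * F m i"
            using key[OF i] Fnn[OF fp i] Fnn[OF fp' i] by (simp add: power2_eq_square)
          show "0 < F m i * F m i"
            using key[OF i] Fpos[OF fp i Lp] Fpos[OF fp' i] Lp LL by (simp add: power2_eq_square)
              (smt (verit) mult_pos_pos)
        qed simp
        moreover have "(L m)\<^sup>2 \<le> L p * L p'"
        proof -
          have "0 \<le> L m" unfolding LF using Fnn[OF fm] by (intro prod_nonneg) auto
          moreover have "L m \<le> L p" using pmax'[OF fm] .
          ultimately show ?thesis using LL by (simp add: power2_eq_square mult_mono)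
        qed
        ultimately show False by simp
      qed
      show "Sf h w p j = Sf h w p' j" if j: "j \<in> {1..h}" "1 \<le> \<zeta> j" for j
      proof (rule ccontr)
        assume ne: "Sf h w p j \<noteq> Sf h w p' j"
        have a: "p j ^ \<xi> j * p' j ^ \<xi> j \<le> (m j ^ \<xi> j)\<^sup>2"
          unfolding m_def using fp fp' j by (intro amgm_pow(1)) (auto simp: feasible_def)
        have b: "Sf h w p j ^ \<zeta> j * Sf h w p' j ^ \<zeta> j < (Sf h w m j ^ \<zeta> j)\<^sup>2"
          unfolding Sm using fp fp' j Sf_nonneg ne by (intro amgm_pow(2)) auto
        have apos: "0 < p j ^ \<xi> j * p' j ^ \<xi> j"
          using Ppos[OF fp j(1) Lp] Ppos[OF fp' j(1)] Lp LL by simp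
        have "F p j * F p' j = (p j ^ \<xi> j * p' j ^ \<xi> j) * (Sf h w p j ^ \<zeta> j * Sf h w p' j ^ \<zeta> j)"
          unfolding F_def by (simp add: algebra_simps)
        also have "\<dots> < (m j ^ \<xi> j)\<^sup>2 * (Sf h w m j ^ \<zeta> j)\<^sup>2"
          using a b apos Spos[OF fp j(1) Lp] Spos[OF fp' j(1)] Lp LL by (intro mult_le_less_imp_less) auto
        also have "\<dots> = (F m j)\<^sup>2" unfolding F_def by (simp add: power_mult_distrib)
        finally have strict: "F p j * F p' j < (F m j)\<^sup>2" .
        have "L p * L p' < (L m)\<^sup>2"
          unfolding LF prod.distrib[symmetric] power2_eq_square prod.distrib[symmetric]
        proof (rule prod_mono_strict[OF j(1)])
          show "F p j * F p' j < F m j * F m j" using strict by (simp add: power2_eq_square)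
          fix i assume i: "i \<in> {1..h}"
          show "0 \<le> F p i * F p' i \<and> F p i * F p' i \<le> F m i * F m i"
            using key[OF i] Fnn[OF fp i] Fnn[OF fp' i] by (simp add: power2_eq_square)
          show "0 < F m i * F m i"
            using key[OF i] Fpos[OF fp i Lp] Fpos[OF fp' i] Lp LL by (simp add: power2_eq_square)
              (smt (verit) mult_pos_pos)
        qed simp
        moreover have "(L m)\<^sup>2 \<le> L p * L p'"
        proof -
          have "0 \<le> L m" unfolding LF using Fnn[OF fm] by (intro prod_nonneg) auto
          moreover have "L m \<le> L p" using pmax'[OF fm] .
          ultimately show ?thesis using LL by (simp add: power2_eq_square mult_mono)
        qed
        ultimately show False by simp
      qed
    qed
    then show "p' = p" using fp fp' by (intro ext) (metis feasible_def)
  qed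
qed

end
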